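(* For every $n\ge 1$ and $z\in\mathbb{C}\setminus\{a,-a\}$, $$P_n'(z)=\beta_n(a)A_n(z)P_{n-1}(z)-B_n(z)P_n(z),$$ where $$A_n(z)=2+\frac{aR_n(a)}{z^2-a^2},\qquad B_n(z)=\frac{z\,r_n(a)}{z^2-a^2}.$$ Here $R_n(a)=\frac{2e^{-a^2}P_n(a)^2}{h_n(a)}$ and $r_n(a)=\frac{2e^{-a^2}P_n(a)P_{n-1}(a)}{h_{n-1}(a)}$.
   Context: Fix $a>0$. Let $w(x)=e^{-x^2}\chi_{\mathbb{R}\setminus(-a,a)}(x)$, so that $w(x)=e^{-x^2}$ for $|x|\ge a$ and $w(x)=0$ for $|x|<a$. Let $P_n(x)=P_n(x;a)$, $n=0,1,2,\dots$, be the monic polynomials of degree $n$ orthogonal with respect to $w$: $$\int_{\mathbb{R}}P_j(x)P_k(x)w(x)\,dx=h_j(a)\delta_{jk}.$$ Since $w$ is even, these polynomials satisfy $xP_n(x)=P_{n+1}(x)+\beta_n(a)P_{n-1}(x)$ for $n\ge1$, with $\beta_n(a)=h_n(a)/h_{n-1}(a)$. The derivative $'$ is taken in $z$. *)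

theory Defs
  imports "HOL-Analysis.Analysis" "HOL-Computational_Algebra.Polynomial"
begin

definition wgt :: "real \<Rightarrow> real \<Rightarrow> real" where
  "wgt a x = (if \<bar>x\<bar> \<ge> a then exp (- (x^2)) else 0)"

definition OP :: "real \<Rightarrow> nat \<Rightarrow> real poly" where
  "OP a = (THE P. (\<forall>n. degree (P n) = n \<and> lead_coeff (P n) = 1) \<and>
      (\<forall>j k. j \<noteq> k \<longrightarrow>
         (LINT x|lborel. poly (P j) x * poly (P k) x * wgt a x) = 0))"

definition hn :: "real \<Rightarrow> nat \<Rightarrow> real" where
  "hn a n = (LINT x|lborel. (poly (OP a n) x)^2 * wgt a x)"

definition beta :: "real \<Rightarrow> nat \<Rightarrow> real" where
  "beta a n = hn a n / hn a (n - 1)"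

definition Rn :: "real \<Rightarrow> nat \<Rightarrow> real" where
  "Rn a n = 2 * exp (- (a^2)) * (poly (OP a n) a)^2 / hn a n"

definition rn :: "real \<Rightarrow> nat \<Rightarrow> real" where
  "rn a n = 2 * exp (- (a^2)) * poly (OP a n) a * poly (OP a (n - 1)) a / hn a (n - 1)"

definition An :: "real \<Rightarrow> nat \<Rightarrow> complex \<Rightarrow> complex" where
  "An a n z = 2 + complex_of_real (a * Rn a n) / (z^2 - (complex_of_real a)^2)"

definition Bn :: "real \<Rightarrow> nat \<Rightarrow> complex \<Rightarrow> complex" where
  "Bn a n z = z * complex_of_real (rn a n) / (z^2 - (complex_of_real a)^2)"

definition cpoly :: "real poly \<Rightarrow> complex \<Rightarrow> complex" where
  "cpoly p z = poly (map_poly complex_of_real p) z"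

end

theory Submission imports Defs "HOL-Probability.Probability" "HOL-Real_Asymp.Real_Asymp" begin


lemma int_mono: "integrable lborel (\<lambda>x::real. x^k * exp (- (x^2)))"
proof -
  let ?s = "sqrt (1/2) :: real"
  have "integrable lborel (\<lambda>x. normal_density 0 ?s x * (x - 0)^k)"
    by (rule integrable_normal_moment) simp
  hence "integrable lborel (\<lambda>x. sqrt pi * (normal_density 0 ?s x * (x - 0)^k))"
    by (rule integrable_mult_right)
  moreover have "sqrt pi * normal_density 0 ?s x = exp (- (x^2))" for x
    by (simp add: normal_density_def real_sqrt_mult)
  hence "(\<lambda>x. sqrt pi * (normal_density 0 ?s x * (x - 0)^k)) = (\<lambda>x. x^k * exp (- (x^2)))"
    by (auto simp: fun_eq_iff mult.assoc[symmetric] mult.commute)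
  ultimately show ?thesis by (metis (no_types, lifting))
qed

lemma int_poly: "integrable lborel (\<lambda>x::real. poly p x * exp (- (x^2)))"
proof -
  have "integrable lborel (\<lambda>x. \<Sum>i\<le>degree p. coeff p i * (x^i * exp (- (x^2))))"
    by (rule Bochner_Integration.integrable_sum) (simp add: int_mono)
  thus ?thesis by (simp add: poly_altdef sum_distrib_right mult.assoc)
qed

lemma tends_poly: "((\<lambda>x::real. poly p x * exp (- (x^2))) \<longlongrightarrow> 0) at_top"
proof -
  have "((\<lambda>x::real. \<Sum>i\<le>degree p. coeff p i * (x^i * exp (- (x^2)))) \<longlongrightarrow> (\<Sum>i\<le>degree p. coeff p i * 0)) at_top"
    by (intro tendsto_sum tendsto_mult tendsto_const) real_asymp
  thus ?thesis by (simp add: poly_altdef sum_distrib_right mult.assoc)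
qed

lemma ftc:
  fixes f :: "real poly" and b :: real
  shows "(LINT x|lborel. indicator {b<..} x * ((poly (pderiv f) x - 2*x*poly f x) * exp (- (x^2))))
     = - poly f b * exp (- (b^2))"
proof -
  let ?F = "\<lambda>x. poly f x * exp (- (x^2))"
  let ?g = "\<lambda>x. (poly (pderiv f) x - 2*x*poly f x) * exp (- (x^2))"
  have d: "(?F has_vector_derivative ?g x) (at x)" for x
    unfolding has_real_derivative_iff_has_vector_derivative[symmetric]
    by (auto intro!: derivative_eq_intros poly_DERIV simp: algebra_simps power2_eq_square)
  have gi: "integrable lborel ?g"
  proof -
    have "?g = (\<lambda>x. poly (pderiv f - [:0,2:] * f) x * exp (- (x^2)))"
      by (auto simp: algebra_simps)
    thus ?thesis using int_poly by metis
  qed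
  have "(LBINT x=ereal b..\<infinity>. ?g x) = 0 - ?F b"
  proof (rule interval_integral_FTC_integrable)
    show "ereal b < \<infinity>" by simp
    show "(?F has_vector_derivative ?g x) (at x)" for x by (rule d)
    show "isCont ?g x" for x by (intro continuous_intros)
    show "set_integrable lborel (einterval (ereal b) \<infinity>) ?g"
      unfolding set_integrable_def by (intro integrable_mult_indicator gi) auto
    show "((?F \<circ> real_of_ereal) \<longlongrightarrow> ?F b) (at_right (ereal b))"
      unfolding ereal_tendsto_simps1 by (intro tendsto_within_subset[OF isCont_def[THEN iffD1]]) (auto intro!: continuous_intros)
    show "((?F \<circ> real_of_ereal) \<longlongrightarrow> 0) (at_left \<infinity>)"
      unfolding ereal_tendsto_simps1 by (rule tends_poly)
  qed
  thus ?thesis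
    by (simp add: interval_integral_to_infinity_eq set_lebesgue_integral_def)
qed



definition Lf :: "real \<Rightarrow> real poly \<Rightarrow> real" where
  "Lf a p = (LINT x|lborel. poly p x * wgt a x)"

definition rfl :: "real poly \<Rightarrow> real poly" where
  "rfl p = pcompose p [:0,-1:]"

lemma poly_rfl[simp]: "poly (rfl p) x = poly p (-x)"
  by (simp add: rfl_def poly_pcompose)

lemma wgt_alt: "wgt a x = indicator {x. a \<le> \<bar>x\<bar>} x * exp (- (x^2))"
  by (simp add: wgt_def indicator_def)

lemma poly_meas[measurable]: "poly (p::real poly) \<in> borel_measurable borel"
proof -
  have "continuous_on UNIV (\<lambda>x::real. poly p x)" by (simp add: continuous_on_poly)
  thus ?thesis by (rule borel_measurable_continuous_onI)
qed

lemma wgt_meas[measurable]: "wgt a \<in> borel_measurable borel"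
  unfolding wgt_def by measurable

lemma int_L: "integrable lborel (\<lambda>x. poly p x * wgt a x)"
proof -
  have "integrable lborel (\<lambda>x. indicator {x. a \<le> \<bar>x\<bar>} x *\<^sub>R (poly p x * exp (- (x^2))))"
    by (rule integrable_mult_indicator) (auto intro: int_poly)
  thus ?thesis by (simp add: wgt_alt mult_ac)
qed

lemma int_half: "integrable lborel (\<lambda>x::real. indicator {b<..} x * (poly p x * exp (- (x^2))))"
proof -
  have "integrable lborel (\<lambda>x. indicator {b<..} x *\<^sub>R (poly p x * exp (- (x^2))))"
    by (rule integrable_mult_indicator) (simp_all add: int_poly)
  thus ?thesis by simp
qed

lemma L_add: "Lf a (p + q) = Lf a p + Lf a q"
  unfolding Lf_def by (simp add: distrib_right int_L)

lemma L_diff: "Lf a (p - q) = Lf a p - Lf a q"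
  unfolding Lf_def by (simp add: left_diff_distrib int_L)

lemma L_smult: "Lf a (smult c p) = c * Lf a p"
  unfolding Lf_def by (simp add: mult.assoc)

lemma L_0[simp]: "Lf a 0 = 0"
  unfolding Lf_def by simp

lemma wgt_neg[simp]: "wgt a (-x) = wgt a x"
  by (simp add: wgt_def)

lemma L_sym: "Lf a (rfl p) = Lf a p"
proof -
  have "Lf a p = \<bar>-1\<bar> *\<^sub>R (LINT x|lborel. poly p (0 + -1 * x) * wgt a (0 + -1*x))"
    unfolding Lf_def by (rule lborel_integral_real_affine) simp
  also have "\<dots> = Lf a (rfl p)"
    unfolding Lf_def by simp
  finally show ?thesis by simp
qed

lemma L_split:
  assumes "a > 0"
  shows "Lf a p = (LINT x|lborel. indicator {a<..} x * (poly p x * exp (- (x^2))))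
                + (LINT x|lborel. indicator {a<..} x * (poly (rfl p) x * exp (- (x^2))))"
proof -
  let ?h = "\<lambda>x. indicator {a<..} x * (poly p x * exp (- (x^2)))"
  let ?k = "\<lambda>x. indicator {a<..} x * (poly (rfl p) x * exp (- (x^2)))"
  have e1: "(LINT x|lborel. ?k (0 + -1 * x)) = (LINT x|lborel. ?k x)"
    using lborel_integral_real_affine[of "-1" ?k 0] by simp
  have "Lf a p = (LINT x|lborel. ?h x + ?k (0 + -1 * x))"
    unfolding Lf_def
  proof (rule integral_cong_AE)
    show "(\<lambda>x. poly p x * wgt a x) \<in> borel_measurable lborel" by measurable
    show "(\<lambda>x. ?h x + ?k (0 + -1 * x)) \<in> borel_measurable lborel" unfolding poly_rfl by measurable
    have "AE x in lborel. x \<noteq> a" "AE x in lborel. x \<noteq> -a" by (rule AE_lborel_singleton)+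
    then show "AE x in lborel. poly p x * wgt a x = ?h x + ?k (0 + -1 * x)"
    proof eventually_elim
      case (elim x) thus ?case using assms
        by (auto simp: wgt_def indicator_def)
    qed
  qed
  also have "\<dots> = (LINT x|lborel. ?h x) + (LINT x|lborel. ?k (0 + -1 * x))"
  proof (rule Bochner_Integration.integral_add)
    show "integrable lborel ?h" by (rule int_half)
    show "integrable lborel (\<lambda>x. ?k (0 + -1 * x))"
      by (rule lborel_integrable_real_affine) (use int_half[of a "rfl p"] in simp_all)
  qed
  finally show ?thesis unfolding e1 .
qed



lemma poly_pderiv_rfl: "poly (pderiv (rfl f)) x = - poly (pderiv f) (-x)"
  by (simp add: rfl_def pderiv_pcompose poly_pcompose pderiv_pCons)

lemma ibp:
  fixes f :: "real poly"
  assumes "a > 0"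
  shows "Lf a (pderiv f - [:0,2:] * f) = - exp (- (a^2)) * (poly f a - poly f (-a))"
proof -
  let ?q = "rfl f"
  have 1: "(LINT x|lborel. indicator {a<..} x * (poly (pderiv f - [:0,2:] * f) x * exp (- (x^2))))
      = - poly f a * exp (- (a^2))"
    using ftc[where f=f and b=a] by (simp add: ac_simps)
  have "(LINT x|lborel. indicator {a<..} x * (poly (rfl (pderiv f - [:0,2:] * f)) x * exp (- (x^2))))
      = (LINT x|lborel. - (indicator {a<..} x * ((poly (pderiv ?q) x - 2*x*poly ?q x) * exp (- (x^2)))))"
    by (rule Bochner_Integration.integral_cong) (auto simp: poly_pderiv_rfl algebra_simps)
  also have "\<dots> = poly f (-a) * exp (- (a^2))"
    using ftc[where f="?q" and b=a] by simp
  finally have 2: "(LINT x|lborel. indicator {a<..} x * (poly (rfl (pderiv f - [:0,2:] * f)) x * exp (- (x^2))))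
      = poly f (-a) * exp (- (a^2))" .
  show ?thesis unfolding L_split[OF assms] 1 2 by (simp add: algebra_simps)
qed

lemma L_nonneg: "Lf a (p*p) \<ge> 0"
  unfolding Lf_def by (rule integral_nonneg_AE) (auto simp: wgt_def)

lemma L_pos:
  assumes "p \<noteq> 0"
  shows "Lf a (p*p) > 0"
proof -
  define c where "c = max (a+1) (Max (insert 0 {x. poly p x = 0}) + 1)"
  have fin: "finite {x. poly p x = 0}" using poly_roots_finite[OF assms] .
  have nr: "poly p x \<noteq> 0" if "x \<ge> c" for x
  proof
    assume "poly p x = 0"
    hence "x \<le> Max (insert 0 {x. poly p x = 0})" using fin by (intro Max_ge) auto
    thus False using that unfolding c_def by auto
  qed
  let ?h = "\<lambda>x. poly (p*p) x * wgt a x"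
  have hc: "continuous_on {c..c+1} ?h"
  proof -
    have "continuous_on {c..c+1} (\<lambda>x. poly (p*p) x * exp (- (x^2)))"
      by (intro continuous_intros)
    moreover have "\<And>x. x \<in> {c..c+1} \<Longrightarrow> ?h x = poly (p*p) x * exp (- (x^2))"
      unfolding c_def wgt_def by auto
    ultimately show ?thesis using continuous_on_cong[OF refl, of "{c..c+1}" ?h "\<lambda>x. poly (p*p) x * exp (- (x^2))"] by blast
  qed
  obtain y where y: "y \<in> {c..c+1}" "\<And>x. x \<in> {c..c+1} \<Longrightarrow> ?h y \<le> ?h x"
  proof -
    have "\<exists>y\<in>{c..c+1}. \<forall>x\<in>{c..c+1}. ?h y \<le> ?h x"
      by (rule continuous_attains_inf[OF compact_Icc _ hc]) simp
    thus ?thesis using that by blast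
  qed
  have "c > a" unfolding c_def by simp
  hence ay: "a \<le> \<bar>y\<bar>" using y(1) by auto
  have "poly p y \<noteq> 0" using nr[of y] y(1) by simp
  hence "poly p y * poly p y > 0"
    by (cases "poly p y > 0") (auto simp: mult_pos_pos mult_neg_neg)
  hence hy: "?h y > 0" using ay unfolding wgt_def by simp
  have "(LINT x|lborel. indicator {c..c+1} x * ?h y) \<le> (LINT x|lborel. ?h x)"
  proof (rule integral_mono)
    show "integrable lborel (\<lambda>x. indicator {c..c+1} x * ?h y)"
      by (intro integrable_mult_left) simp
    show "integrable lborel ?h" by (rule int_L)
    show "indicator {c..c+1} x * ?h y \<le> ?h x" for x
    proof (cases "x \<in> {c..c+1}")
      case True thus ?thesis using y(2)[of x] by simp
    next
      case False
      have "?h x \<ge> 0" unfolding wgt_def by simp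
      thus ?thesis using False by simp
    qed
  qed
  moreover have "(LINT x|lborel. indicator {c..c+1} x * ?h y) = ?h y"
    by simp
  ultimately show ?thesis using hy unfolding Lf_def by linarith
qed



definition fam :: "(nat \<Rightarrow> real poly) \<Rightarrow> bool" where
  "fam P \<longleftrightarrow> (\<forall>n. degree (P n) = n \<and> lead_coeff (P n) = 1)"

definition orth :: "real \<Rightarrow> (nat \<Rightarrow> real poly) \<Rightarrow> bool" where
  "orth a P \<longleftrightarrow> (\<forall>j k. j \<noteq> k \<longrightarrow> Lf a (P j * P k) = 0)"

lemma OP_eq: "OP a = (THE P. fam P \<and> orth a P)"
  unfolding OP_def fam_def orth_def Lf_def by (simp add: mult_ac)

lemma L_comm: "Lf a (p*q) = Lf a (q*p)" by (simp add: mult.commute)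

lemma L_sum: "finite A \<Longrightarrow> Lf a (\<Sum>k\<in>A. f k) = (\<Sum>k\<in>A. Lf a (f k))"
  by (induction A rule: finite_induct) (simp_all add: L_add)

lemma L_lin: "Lf a (p * (u + smult c w)) = Lf a (p * u) + c * Lf a (p * w)"
  by (simp add: distrib_left L_add L_smult)

lemma monic_ne0: "lead_coeff p = (1::real) \<Longrightarrow> p \<noteq> 0" by auto

lemma reduce_deg:
  fixes q P :: "real poly"
  assumes "degree q \<le> Suc m" "degree P = Suc m" "lead_coeff P = 1"
  shows "degree (q - smult (coeff q (Suc m)) P) \<le> m"
proof (rule degree_le, intro allI impI)
  fix i assume "m < i"
  show "coeff (q - smult (coeff q (Suc m)) P) i = 0"
  proof (cases "i = Suc m")
    case True thus ?thesis using assms by simp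
  next
    case False hence "i > Suc m" using \<open>m < i\<close> by simp
    thus ?thesis using assms by (simp add: coeff_eq_0)
  qed
qed

lemma orth_low:
  assumes "fam P" "orth a P"
  shows "degree q < n \<Longrightarrow> Lf a (P n * q) = 0"
proof -
  have "\<forall>q. degree q \<le> m \<longrightarrow> m < n \<longrightarrow> Lf a (P n * q) = 0" for m
  proof (induction m)
    case 0
    show ?case
    proof (intro allI impI)
      fix q :: "real poly" assume q: "degree q \<le> 0" and n: "0 < n"
      have P0: "P 0 = 1" using assms(1) unfolding fam_def
        by (metis degree_0_id lead_coeff_1 one_poly_eq_simps(1) pCons_one)
      have "q = 0 + smult (coeff q 0) (P 0)" using q P0 degree_0_id[of q] by (simp add: smult_one)
      hence "Lf a (P n * q) = Lf a (P n * 0) + coeff q 0 * Lf a (P n * P 0)"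
        using L_lin by metis
      thus "Lf a (P n * q) = 0" using assms(2) n unfolding orth_def by simp
    qed
  next
    case (Suc m)
    show ?case
    proof (intro allI impI)
      fix q :: "real poly" assume q: "degree q \<le> Suc m" and n: "Suc m < n"
      let ?r = "q - smult (coeff q (Suc m)) (P (Suc m))"
      have "degree ?r \<le> m" using reduce_deg[OF q] assms(1) unfolding fam_def by blast
      hence r0: "Lf a (P n * ?r) = 0" using Suc.IH n by simp
      have "q = ?r + smult (coeff q (Suc m)) (P (Suc m))" by simp
      hence "Lf a (P n * q) = Lf a (P n * ?r) + coeff q (Suc m) * Lf a (P n * P (Suc m))"
        using L_lin by metis
      thus "Lf a (P n * q) = 0" using r0 assms(2) n unfolding orth_def by simp
    qed
  qed
  thus "degree q < n \<Longrightarrow> Lf a (P n * q) = 0"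
    by (cases n) auto
qed

lemma orth_top:
  assumes "fam P" "orth a P" "degree q \<le> n"
  shows "Lf a (P n * q) = coeff q n * Lf a (P n * P n)"
proof (cases n)
  case 0
  have P0: "P 0 = 1" using assms(1) unfolding fam_def
    by (metis degree_0_id lead_coeff_1 one_poly_eq_simps(1) pCons_one)
  have "q = [:coeff q 0:]" using assms(3) 0 degree_0_id[of q] by simp
  thus ?thesis using 0 P0 by (metis L_smult mult.right_neutral mult_1 smult_one)
next
  case (Suc m)
  let ?r = "q - smult (coeff q (Suc m)) (P (Suc m))"
  have "degree ?r \<le> m" using reduce_deg[of q m] assms Suc unfolding fam_def by blast
  hence r0: "Lf a (P n * ?r) = 0" using orth_low[OF assms(1,2)] Suc by simp
  have "q = ?r + smult (coeff q (Suc m)) (P (Suc m))" by simp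
  hence "Lf a (P n * q) = Lf a (P n * ?r) + coeff q (Suc m) * Lf a (P n * P (Suc m))"
    using L_lin by metis
  thus ?thesis using r0 Suc by simp
qed

lemma fam_unique:
  assumes "fam P" "orth a P" "fam Q" "orth a Q"
  shows "P = Q"
proof
  fix n
  let ?d = "P n - Q n"
  have c: "coeff ?d i = 0" if "i \<ge> n" for i
  proof (cases "i = n")
    case True thus ?thesis using assms(1,3) unfolding fam_def by (metis coeff_diff diff_self)
  next
    case False hence "i > n" using that by simp
    thus ?thesis using assms(1,3) unfolding fam_def by (simp add: coeff_eq_0)
  qed
  show "P n = Q n"
  proof (rule ccontr)
    assume ne: "P n \<noteq> Q n"
    hence d0: "?d \<noteq> 0" by simp
    have "degree ?d < n"
    proof (cases n)
      case 0 hence "?d = 0" using c by (intro poly_eqI) simp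
      thus ?thesis using d0 by simp
    next
      case (Suc m)
      have "degree ?d \<le> m" by (rule degree_le) (use c Suc in auto)
      thus ?thesis using Suc by simp
    qed
    hence "Lf a (P n * ?d) = 0" "Lf a (Q n * ?d) = 0"
      using orth_low[OF assms(1,2)] orth_low[OF assms(3,4)] by auto
    hence "Lf a (?d * ?d) = 0" by (simp add: left_diff_distrib L_diff)
    thus False using L_pos[OF d0, of a] by simp
  qed
qed

primrec G :: "real \<Rightarrow> nat \<Rightarrow> nat \<Rightarrow> real poly" where
  "G a 0 = (\<lambda>k. 1)"
| "G a (Suc n) = (G a n)(Suc n := monom 1 (Suc n) -
      (\<Sum>k\<le>n. smult (Lf a (monom 1 (Suc n) * G a n k) / Lf a (G a n k * G a n k)) (G a n k)))"

lemma G_inv: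
  "(\<forall>k\<le>n. degree (G a n k) = k \<and> lead_coeff (G a n k) = 1) \<and>
   (\<forall>j\<le>n. \<forall>k\<le>n. j \<noteq> k \<longrightarrow> Lf a (G a n j * G a n k) = 0)"
proof (induction n)
  case 0 thus ?case by simp
next
  case (Suc n)
  let ?c = "\<lambda>k. Lf a (monom 1 (Suc n) * G a n k) / Lf a (G a n k * G a n k)"
  let ?S = "\<Sum>k\<le>n. smult (?c k) (G a n k)"
  let ?g = "monom 1 (Suc n) - ?S"
  have old: "G a (Suc n) k = G a n k" if "k \<le> n" for k using that by simp
  have new: "G a (Suc n) (Suc n) = ?g" by simp
  have dS: "degree ?S \<le> n"
    by (rule degree_sum_le) (use Suc.IH in \<open>auto intro: order.trans[OF degree_smult_le]\<close>)
  have cg1: "coeff ?g (Suc n) = 1" using dS by (simp add: coeff_eq_0)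
  have cg2: "coeff ?g i = 0" if "i > Suc n" for i using dS that by (simp add: coeff_eq_0)
  have dg: "degree ?g = Suc n"
  proof (rule antisym)
    show "degree ?g \<le> Suc n" by (rule degree_le) (use cg2 in auto)
    show "Suc n \<le> degree ?g" by (rule le_degree, unfold cg1) simp
  qed
  have lg: "lead_coeff ?g = 1" using dg cg1 by simp
  have pos: "Lf a (G a n j * G a n j) \<noteq> 0" if "j \<le> n" for j
    using L_pos[of "G a n j" a] Suc.IH that by (metis less_irrefl monic_ne0)
  have og: "Lf a (?g * G a n j) = 0" if j: "j \<le> n" for j
  proof -
    have "Lf a (?S * G a n j) = (\<Sum>k\<le>n. ?c k * Lf a (G a n k * G a n j))"
      by (simp add: sum_distrib_right L_sum L_smult)
    also have "\<dots> = (\<Sum>k\<le>n. if k = j then ?c j * Lf a (G a n j * G a n j) else 0)"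
      by (rule sum.cong) (use Suc.IH j in auto)
    also have "\<dots> = ?c j * Lf a (G a n j * G a n j)" using j by simp
    also have "\<dots> = Lf a (monom 1 (Suc n) * G a n j)" using pos[OF j] by simp
    finally show ?thesis by (simp add: left_diff_distrib L_diff)
  qed
  show ?case
  proof (intro conjI allI impI)
    fix k assume "k \<le> Suc n"
    thus "degree (G a (Suc n) k) = k" "lead_coeff (G a (Suc n) k) = 1"
      using Suc.IH dg lg by (auto simp: le_Suc_eq)
  next
    fix j k assume jk: "j \<le> Suc n" "k \<le> Suc n" "j \<noteq> k"
    show "Lf a (G a (Suc n) j * G a (Suc n) k) = 0"
    proof (cases "j = Suc n")
      case True
      hence "k \<le> n" using jk by simp
      thus ?thesis using True og by simp
    next
      case False
      hence j: "j \<le> n" using jk by simp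
      show ?thesis
      proof (cases "k = Suc n")
        case True thus ?thesis using j og L_comm[of a] by simp
      next
        case False thus ?thesis using j jk Suc.IH by simp
      qed
    qed
  qed
qed

lemma G_prefix: "k \<le> n \<Longrightarrow> G a n k = G a k k"
  by (induction n) (auto simp: le_Suc_eq)

lemma exists_fam: "fam (\<lambda>k. G a k k) \<and> orth a (\<lambda>k. G a k k)"
proof
  show "fam (\<lambda>k. G a k k)" unfolding fam_def using G_inv by blast
  show "orth a (\<lambda>k. G a k k)" unfolding orth_def
  proof (intro allI impI)
    fix j k :: nat assume "j \<noteq> k"
    let ?n = "max j k"
    have "Lf a (G a ?n j * G a ?n k) = 0" using G_inv[of ?n a] \<open>j \<noteq> k\<close> by simp
    thus "Lf a (G a j j * G a k k) = 0" using G_prefix[of j ?n a] G_prefix[of k ?n a] by simp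
  qed
qed

lemma OP_fam: "fam (OP a)" and OP_orth: "orth a (OP a)"
proof -
  have "\<exists>!P. fam P \<and> orth a P"
    using exists_fam fam_unique by blast
  hence "fam (OP a) \<and> orth a (OP a)" unfolding OP_eq by (rule theI')
  thus "fam (OP a)" "orth a (OP a)" by auto
qed



lemma peq: "(\<And>x. poly p x = poly q x) \<Longrightarrow> p = (q :: real poly)"
  using poly_eq_poly_eq_iff[of p q] by auto

lemma hn_eq: "hn a n = Lf a (OP a n * OP a n)"
  by (simp add: hn_def Lf_def power2_eq_square)

lemma deg_OP[simp]: "degree (OP a n) = n" using OP_fam unfolding fam_def by blast
lemma lead_OP[simp]: "lead_coeff (OP a n) = 1" using OP_fam unfolding fam_def by blast
lemma coeff_OP_n[simp]: "coeff (OP a n) n = 1" using lead_OP[of a n] by simp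
lemma OP_ne0[simp]: "OP a n \<noteq> 0" using lead_OP[of a n] by (metis leading_coeff_0_iff zero_neq_one)

lemma low: "degree q < n \<Longrightarrow> Lf a (OP a n * q) = 0"
  by (rule orth_low[OF OP_fam OP_orth])

lemma low0: "q = 0 \<or> degree q < n \<Longrightarrow> Lf a (OP a n * q) = 0"
  using low by auto

lemma top: "degree q \<le> n \<Longrightarrow> Lf a (OP a n * q) = coeff q n * hn a n"
  unfolding hn_eq by (rule orth_top[OF OP_fam OP_orth])

lemma hpos: "hn a n > 0" unfolding hn_eq by (rule L_pos) simp

lemma orth_OP: "j \<noteq> k \<Longrightarrow> Lf a (OP a j * OP a k) = 0"
  using OP_orth unfolding orth_def by blast

lemma OP0: "OP a 0 = 1"
  using deg_OP[of a 0] lead_OP[of a 0] degree_0_id[of "OP a 0"] by (simp add: one_pCons)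

lemma degree_rfl[simp]: "degree (rfl p) = degree p"
  by (simp add: rfl_def degree_pcompose)

lemma lead_rfl: "lead_coeff (rfl p) = (-1)^(degree p) * lead_coeff (p :: real poly)"
  by (simp add: rfl_def lead_coeff_comp)

lemma rfl_mult: "rfl (p*q) = rfl p * rfl q" by (simp add: rfl_def pcompose_mult)
lemma rfl_smult: "rfl (smult c p) = smult c (rfl p)" by (simp add: rfl_def pcompose_smult)

lemma parity_poly: "rfl (OP a n) = smult ((-1)^n) (OP a n)"
proof -
  let ?Q = "\<lambda>k. smult ((-1)^k) (rfl (OP a k))"
  have cr: "coeff (rfl (OP a k)) k = (-1)^k" for k
    using lead_rfl[of "OP a k"] by simp
  have f: "fam ?Q" unfolding fam_def
    by (auto simp: cr power_mult_distrib[symmetric])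
  have o: "orth a ?Q" unfolding orth_def
  proof (intro allI impI)
    fix j k :: nat assume "j \<noteq> k"
    have "?Q j * ?Q k = smult ((-1)^j * (-1)^k) (rfl (OP a j * OP a k))"
      by (simp add: rfl_mult mult_ac)
    hence "Lf a (?Q j * ?Q k) = (-1)^j * (-1)^k * Lf a (OP a j * OP a k)"
      by (simp add: L_smult L_sym)
    thus "Lf a (?Q j * ?Q k) = 0" using orth_OP[OF \<open>j \<noteq> k\<close>] by simp
  qed
  have "?Q = OP a" using fam_unique[OF f o OP_fam OP_orth] .
  hence "?Q n = OP a n" by (rule fun_cong)
  hence "smult ((-1)^n) (?Q n) = smult ((-1)^n) (OP a n)" by simp
  thus ?thesis by (simp add: power_mult_distrib[symmetric])
qed

lemma parity: "poly (OP a n) (-x) = (-1)^n * poly (OP a n) x"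
  using arg_cong[OF parity_poly[of a n], of "\<lambda>p. poly p x"] by simp

lemma star:
  assumes "a > 0" "n \<ge> 1" "degree q < n"
  shows "Lf a (pderiv (OP a n) * q) = 2 * coeff q (n-1) * hn a n
     - exp (- (a^2)) * (poly (OP a n) a * poly q a - poly (OP a n) (-a) * poly q (-a))"
proof -
  let ?P = "OP a n"
  have i: "Lf a (pderiv (?P * q) - [:0,2:] * (?P * q)) = - exp (- (a^2)) * (poly (?P*q) a - poly (?P*q) (-a))"
    by (rule ibp[OF assms(1)])
  have e: "pderiv (?P * q) - [:0,2:] * (?P * q) = pderiv ?P * q + ?P * pderiv q - smult 2 (?P * pCons 0 q)"
    by (rule peq) (simp add: pderiv_mult algebra_simps)
  have d1: "Lf a (?P * pderiv q) = 0"
    by (rule low) (use assms in \<open>simp add: degree_pderiv\<close>)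
  have d2: "Lf a (?P * pCons 0 q) = coeff q (n-1) * hn a n"
  proof -
    have "degree (pCons 0 q) \<le> n" using degree_pCons_le[of 0 q] assms(3) by linarith
    hence "Lf a (?P * pCons 0 q) = coeff (pCons 0 q) n * hn a n" by (rule top)
    also have "coeff (pCons 0 q) n = coeff q (n-1)" using assms(2)
      by (cases n) auto
    finally show ?thesis .
  qed
  have "Lf a (pderiv (?P * q) - [:0,2:] * (?P * q)) = Lf a (pderiv ?P * q) + Lf a (?P * pderiv q) - 2 * Lf a (?P * pCons 0 q)"
    unfolding e by (simp only: L_add L_diff L_smult)
  with i d1 d2 show ?thesis by (simp add: algebra_simps)
qed



lemma kill_top:
  fixes q P :: "real poly"
  assumes "degree P = m" "lead_coeff P = 1" "degree q \<le> m" "i \<ge> m"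
  shows "coeff (q - smult (coeff q m) P) i = 0"
proof (cases "i = m")
  case True thus ?thesis using assms by simp
next
  case False hence "i > m" using assms by simp
  thus ?thesis using assms by (simp add: coeff_eq_0)
qed

lemma small:
  fixes d :: "real poly"
  assumes "\<And>i. i \<ge> m \<Longrightarrow> coeff d i = 0"
  shows "d = 0 \<or> degree d < m"
proof (cases m)
  case 0 hence "d = 0" using assms by (intro poly_eqI) simp
  thus ?thesis by simp
next
  case (Suc k)
  have "degree d \<le> k" by (rule degree_le) (use assms Suc in auto)
  thus ?thesis using Suc by simp
qed

lemma recur:
  assumes "n \<ge> 1"
  shows "\<exists>b. OP a (Suc n) = pCons 0 (OP a n) - smult b (OP a n) - smult (hn a n / hn a (n-1)) (OP a (n-1))"
proof -
  let ?P = "OP a n" let ?P1 = "OP a (Suc n)" let ?Pm = "OP a (n-1)"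
  let ?t0 = "pCons 0 ?P - ?P1"
  have dt0: "degree ?t0 \<le> n"
  proof (rule degree_le, intro allI impI)
    fix i assume "n < i"
    then obtain j where j: "i = Suc j" "j \<ge> n" by (cases i) auto
    show "coeff ?t0 i = 0"
    proof (cases "j = n")
      case True thus ?thesis using j by simp
    next
      case False hence "j > n" using j by simp
      thus ?thesis using j by (simp add: coeff_eq_0)
    qed
  qed
  define b where "b = coeff ?t0 n"
  let ?t1 = "?t0 - smult b ?P"
  have c1: "coeff ?t1 i = 0" if "i \<ge> n" for i
    unfolding b_def by (rule kill_top) (use dt0 that in auto)
  have dt1: "degree ?t1 \<le> n - 1"
    by (rule degree_le) (use c1 in auto)
  define g where "g = coeff ?t1 (n-1)"
  let ?t2 = "?t1 - smult g ?Pm"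
  have c2: "coeff ?t2 i = 0" if "i \<ge> n - 1" for i
    unfolding g_def by (rule kill_top) (use dt1 that in auto)
  have orth2: "Lf a (?t2 * u) = 0" if u: "degree u < n - 1" for u
  proof -
    have e: "?t2 * u = ?P * pCons 0 u - ?P1 * u - smult b (?P * u) - smult g (?Pm * u)"
      by (rule peq) (simp add: algebra_simps)
    have du: "degree (pCons 0 u) < n" using degree_pCons_le[of 0 u] u by linarith
    have h1: "Lf a (?P * pCons 0 u) = 0" using du by (rule low)
    have h2: "Lf a (?P1 * u) = 0" "Lf a (?P * u) = 0" "Lf a (?Pm * u) = 0"
      using u by (auto intro!: low)
    show ?thesis unfolding e L_diff L_smult h1 h2 by simp
  qed
  have t2: "?t2 = 0"
  proof (rule ccontr)
    assume ne: "?t2 \<noteq> 0"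
    hence "degree ?t2 < n - 1" using small[of "n-1" ?t2] c2 by blast
    hence "Lf a (?t2 * ?t2) = 0" by (rule orth2)
    thus False using L_pos[OF ne, of a] by simp
  qed
  have gv: "g = hn a n / hn a (n-1)"
  proof -
    have "Lf a (?Pm * ?t1) = g * hn a (n-1)" unfolding g_def by (rule top) (rule dt1)
    moreover have "?Pm * ?t1 = ?P * pCons 0 ?Pm - ?Pm * ?P1 - smult b (?Pm * ?P)"
      by (rule peq) (simp add: algebra_simps)
    moreover have "Lf a (?P * pCons 0 ?Pm) = hn a n"
    proof -
      have "degree (pCons 0 ?Pm) \<le> n" using degree_pCons_le[of 0 ?Pm] assms by simp
      hence "Lf a (?P * pCons 0 ?Pm) = coeff (pCons 0 ?Pm) n * hn a n" by (rule top)
      also have "coeff (pCons 0 ?Pm) n = 1" using assms by (cases n) auto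
      finally show ?thesis by simp
    qed
    moreover have "Lf a (?Pm * ?P1) = 0" "Lf a (?Pm * ?P) = 0"
      using orth_OP[of "n-1" "Suc n" a] orth_OP[of "n-1" n a] assms by auto
    ultimately have "g * hn a (n-1) = hn a n" by (simp add: L_diff L_smult)
    thus ?thesis using hpos[of a "n-1"] by (simp add: field_simps)
  qed
  have "?P1 = pCons 0 ?P - smult b ?P - smult g ?Pm"
    using t2 by (simp add: algebra_simps)
  thus ?thesis unfolding gv by blast
qed



definition Nk :: "real \<Rightarrow> nat \<Rightarrow> real \<Rightarrow> real poly" where
  "Nk a n y = smult (poly (OP a (n-1)) y) (OP a n) - smult (poly (OP a n) y) (OP a (n-1))"

definition Kk :: "real \<Rightarrow> nat \<Rightarrow> real \<Rightarrow> real poly" where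
  "Kk a n y = Nk a n y div [:-y,1:]"

lemma K_mult: "[:-y,1:] * Kk a n y = Nk a n y"
proof -
  have "poly (Nk a n y) y = 0" by (simp add: Nk_def)
  hence "[:-y,1:] dvd Nk a n y" by (simp add: poly_eq_0_iff_dvd)
  thus ?thesis unfolding Kk_def by (rule dvd_mult_div_cancel)
qed

lemma K_eval: "(x - y) * poly (Kk a n y) x = poly (Nk a n y) x"
  using arg_cong[OF K_mult[of y a n], of "\<lambda>p. poly p x"] by (simp add: left_diff_distrib)

lemma lin_ne0: "[:-y,1:] \<noteq> (0::real poly)" by simp

lemma poly_OP1: "poly (OP a (Suc 0)) x = coeff (OP a (Suc 0)) 0 + x"
proof -
  have "poly (OP a (Suc 0)) x = (\<Sum>i\<le>Suc 0. coeff (OP a (Suc 0)) i * x^i)"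
    by (simp add: poly_altdef)
  thus ?thesis by simp
qed

lemma K1: "Kk a (Suc 0) y = 1"
proof -
  have "Nk a (Suc 0) y = [:-y,1:] * 1"
    by (rule peq) (simp add: Nk_def OP0 poly_OP1)
  hence "[:-y,1:] * Kk a (Suc 0) y = [:-y,1:] * 1" using K_mult by simp
  thus ?thesis using lin_ne0 by (metis mult_left_cancel)
qed

lemma K_rec:
  assumes "n \<ge> 1"
  shows "Kk a (Suc n) y = smult (poly (OP a n) y) (OP a n) + smult (hn a n / hn a (n-1)) (Kk a n y)"
proof -
  obtain b where b: "OP a (Suc n) = pCons 0 (OP a n) - smult b (OP a n) - smult (hn a n / hn a (n-1)) (OP a (n-1))"
    using recur[OF assms] by blast
  let ?g = "hn a n / hn a (n-1)"
  have "[:-y,1:] * Kk a (Suc n) y = [:-y,1:] * (smult (poly (OP a n) y) (OP a n) + smult ?g (Kk a n y))"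
  proof (rule peq)
    fix x
    have ev: "poly (OP a (Suc n)) t = t * poly (OP a n) t - b * poly (OP a n) t - ?g * poly (OP a (n-1)) t" for t
      by (subst b) simp
    have "poly ([:-y,1:] * Kk a (Suc n) y) x = poly (Nk a (Suc n) y) x" by (simp only: K_mult)
    also have "\<dots> = (x - y) * poly (OP a n) y * poly (OP a n) x + ?g * poly (Nk a n y) x"
      by (simp add: Nk_def ev algebra_simps)
    also have "\<dots> = poly ([:-y,1:] * (smult (poly (OP a n) y) (OP a n) + smult ?g (Kk a n y))) x"
      by (simp add: K_eval[symmetric] algebra_simps)
    finally show "poly ([:-y,1:] * Kk a (Suc n) y) x = poly ([:-y,1:] * (smult (poly (OP a n) y) (OP a n) + smult ?g (Kk a n y))) x" .
  qed
  thus ?thesis using lin_ne0 by (metis mult_left_cancel)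
qed

lemma LK: "n \<ge> 1 \<Longrightarrow> Lf a (Kk a n y) = hn a (n-1)"
proof (induction n rule: dec_induct)
  case base
  show ?case by (simp add: K1 hn_eq OP0)
next
  case (step n)
  have z: "Lf a (OP a n) = 0" using low[of 1 n a] step by simp
  have "Lf a (Kk a (Suc n) y) = poly (OP a n) y * Lf a (OP a n) + hn a n / hn a (n-1) * Lf a (Kk a n y)"
    using K_rec[OF step(1)] by (simp add: L_add L_smult)
  also have "\<dots> = hn a n" using z step(3) hpos[of a "n-1"] by simp
  finally show ?case by simp
qed

lemma repro:
  assumes "n \<ge> 1" "degree q < n"
  shows "Lf a (Kk a n y * q) = poly q y * hn a (n-1)"
proof -
  have "poly (q - [:poly q y:]) y = 0" by simp
  hence "[:-y,1:] dvd (q - [:poly q y:])" using poly_eq_0_iff_dvd[of "q - [:poly q y:]" y] by simp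
  then obtain s where s: "q - [:poly q y:] = [:-y,1:] * s" by (auto elim: dvdE)
  have ds: "s = 0 \<or> degree s < n - 1"
  proof (cases "s = 0")
    case False
    have "degree (q - [:poly q y:]) \<le> max (degree q) (degree [:poly q y:])" by (rule degree_diff_le_max)
    hence "degree ([:-y,1:] * s) < n" using s assms by simp
    moreover have "degree ([:-y,1:] * s) = 1 + degree s"
      by (subst degree_mult_eq[OF lin_ne0 False]) simp
    ultimately have "1 + degree s < n" by simp
    thus ?thesis by linarith
  qed simp
  obtain c where c: "c = poly q y" by blast
  have q: "q = [:-y,1:] * s + smult c 1"
    using s c by (metis add.commute diff_eq_eq smult_one)
  have "Kk a n y * q = Nk a n y * s + smult c (Kk a n y)"
    unfolding q by (simp add: K_mult[symmetric] algebra_simps)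
  hence "Kk a n y * q = Nk a n y * s + smult (poly q y) (Kk a n y)" using c by simp
  hence "Lf a (Kk a n y * q) = Lf a (Nk a n y * s) + poly q y * Lf a (Kk a n y)"
    by (simp add: L_add L_smult)
  moreover have "Lf a (Nk a n y * s) = 0"
  proof -
    have "Lf a (OP a n * s) = 0" "Lf a (OP a (n-1) * s) = 0" using ds by (auto intro!: low0)
    thus ?thesis by (simp add: Nk_def algebra_simps L_diff L_smult)
  qed
  ultimately show ?thesis using LK[OF assms(1)] by simp
qed

lemma degK:
  assumes "n \<ge> 1" "i \<ge> n"
  shows "coeff (Kk a n y) i = 0"
proof (cases "Kk a n y = 0")
  case False
  have "degree (Nk a n y) \<le> n" unfolding Nk_def
    by (rule order.trans[OF degree_diff_le_max]) (auto intro: order.trans[OF degree_smult_le])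
  moreover have "1 + degree (Kk a n y) = degree (Nk a n y)" unfolding K_mult[symmetric]
    by (subst degree_mult_eq[OF lin_ne0 False]) simp
  ultimately have "1 + degree (Kk a n y) \<le> n" by simp
  thus ?thesis using assms by (simp add: coeff_eq_0)
qed simp



lemma sign_pred: "n \<ge> 1 \<Longrightarrow> (-1::real)^n = - ((-1)^(n-1))"
  by (cases n) auto

lemma main_poly:
  assumes a: "a > 0" and n: "n \<ge> 1"
  shows "poly (pderiv (OP a n)) x * (x^2 - a^2)
    = 2 * (hn a n / hn a (n-1)) * (x^2 - a^2) * poly (OP a (n-1)) x
      + a * (hn a n / hn a (n-1)) * Rn a n * poly (OP a (n-1)) x
      - rn a n * x * poly (OP a n) x"
proof -
  define P where "P = OP a n"
  define Q where "Q = OP a (n-1)"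
  define h where "h = hn a n"
  define h' where "h' = hn a (n-1)"
  define e where "e = exp (- (a^2))"
  define pa where "pa = poly P a"
  define qa where "qa = poly Q a"
  define s where "s = (-1::real)^n"
  have hp: "h > 0" "h' > 0" unfolding h_def h'_def by (rule hpos)+
  have Pm: "poly P (-a) = s * pa" unfolding P_def pa_def s_def by (rule parity)
  have Qm: "s * poly Q (-a) = - qa"
    unfolding Q_def qa_def s_def using parity[of a "n-1" a] sign_pred[OF n] by simp
  define c where "c = e*pa/h'"
  define M where "M = smult (-c) (Kk a n a - smult s (Kk a n (-a)))"
  define E where "E = pderiv P - smult (2*h/h') Q - M"
  have cE: "coeff E i = 0" if i: "i \<ge> n" for i
  proof -
    have "coeff (pderiv P) i = 0" using i n unfolding P_def by (simp add: coeff_eq_0 degree_pderiv)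
    moreover have "coeff Q i = 0" using i n unfolding Q_def by (simp add: coeff_eq_0)
    moreover have "coeff M i = 0" unfolding M_def using degK[OF n i] by simp
    ultimately show ?thesis unfolding E_def by simp
  qed
  have oE: "Lf a (E * q) = 0" if q: "degree q < n" for q
  proof -
    have eq: "E * q = pderiv P * q - smult (2*h/h') (Q * q)
       - smult (-c) (Kk a n a * q - smult s (Kk a n (-a) * q))"
      unfolding E_def M_def by (simp add: algebra_simps)
    have 1: "Lf a (pderiv P * q) = 2 * coeff q (n-1) * h - e * (pa * poly q a - s * pa * poly q (-a))"
      using star[OF a n q] unfolding P_def h_def e_def pa_def using Pm unfolding P_def pa_def by simp
    have 2: "Lf a (Q * q) = coeff q (n-1) * h'" unfolding Q_def h'_def by (rule top) (use q in simp)
    have 3: "Lf a (Kk a n a * q) = poly q a * h'" "Lf a (Kk a n (-a) * q) = poly q (-a) * h'"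
      unfolding h'_def by (rule repro[OF n q])+
    show ?thesis unfolding eq L_diff L_smult 1 2 3 c_def using hp by (simp add: field_simps)
  qed
  have E0: "E = 0"
  proof (rule ccontr)
    assume ne: "E \<noteq> 0"
    hence "degree E < n" using small[of n E] cE by blast
    hence "Lf a (E * E) = 0" by (rule oE)
    thus False using L_pos[OF ne, of a] by simp
  qed
  define b where "b = h/h'"
  hence dP: "poly (pderiv P) x = 2*b * poly Q x + poly M x"
    using E0
    unfolding E_def by (simp add: algebra_simps)
  have F1: "(x - a) * poly (Kk a n a) x = qa * poly P x - pa * poly Q x"
    unfolding K_eval by (simp add: Nk_def P_def Q_def pa_def qa_def)
  have F2: "(x + a) * poly (Kk a n (-a)) x = poly Q (-a) * poly P x - poly P (-a) * poly Q x"
    using K_eval[of x "-a" a n] by (simp add: Nk_def P_def Q_def)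
  have ss: "s * s = 1" unfolding s_def by simp
  have "(x^2 - a^2) * poly M x = -c * ((x + a) * ((x - a) * poly (Kk a n a) x)
        - s * (x - a) * ((x + a) * poly (Kk a n (-a)) x))"
    unfolding M_def by (simp add: algebra_simps power2_eq_square)
  also have "\<dots> = -c * ((x + a) * (qa * poly P x - pa * poly Q x)
        - (x - a) * ((s * poly Q (-a)) * poly P x - (s * poly P (-a)) * poly Q x))"
    unfolding F1 F2 by (simp add: algebra_simps)
  also have "\<dots> = -c * ((x + a) * (qa * poly P x - pa * poly Q x)
        - (x - a) * ((- qa) * poly P x - pa * poly Q x))"
    unfolding Qm Pm using ss by (simp add: mult.assoc[symmetric])
  finally have XM: "(x^2 - a^2) * poly M x = -c * (2 * x * qa * poly P x - 2 * a * pa * poly Q x)"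
    by (simp add: algebra_simps)
  have R: "Rn a n = 2 * e * pa^2 / h" unfolding Rn_def e_def pa_def P_def h_def by simp
  have r: "rn a n = 2 * e * pa * qa / h'" unfolding rn_def e_def pa_def P_def qa_def Q_def h'_def by simp
  have k1: "a * b * (2*e*pa^2/h) = 2*a*c*pa" using hp unfolding c_def b_def by (simp add: field_simps power2_eq_square)
  have k2: "2*e*pa*qa/h' = 2*c*qa" unfolding c_def by simp
  show ?thesis
    unfolding P_def[symmetric] Q_def[symmetric] h_def[symmetric] h'_def[symmetric] b_def[symmetric] R r dP k1 k2
    using XM by (simp add: algebra_simps)
qed



abbreviation mc :: "real poly \<Rightarrow> complex poly" where "mc \<equiv> map_poly complex_of_real"

lemma mc_add: "mc (p + q) = mc p + mc q" by (rule poly_eqI) (simp add: coeff_map_poly)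
lemma mc_diff: "mc (p - q) = mc p - mc q" by (rule poly_eqI) (simp add: coeff_map_poly)
lemma mc_smult: "mc (smult c p) = smult (of_real c) (mc p)" by (rule poly_eqI) (simp add: coeff_map_poly)
lemma mc_pCons: "mc (pCons c p) = pCons (of_real c) (mc p)"
  by (rule poly_eqI) (simp add: coeff_map_poly coeff_pCons split: nat.split)

lemma cpoly_add: "cpoly (p + q) z = cpoly p z + cpoly q z" by (simp add: cpoly_def mc_add)
lemma cpoly_diff: "cpoly (p - q) z = cpoly p z - cpoly q z" by (simp add: cpoly_def mc_diff)
lemma cpoly_smult: "cpoly (smult c p) z = of_real c * cpoly p z" by (simp add: cpoly_def mc_smult)
lemma cpoly_pCons: "cpoly (pCons c p) z = of_real c + z * cpoly p z" by (simp add: cpoly_def mc_pCons)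

theorem mainTheorem1:
  fixes a :: real and n :: nat and z :: complex
  assumes "a > 0" and "n \<ge> 1"
    and "z \<noteq> complex_of_real a" and "z \<noteq> - complex_of_real a"
  shows "cpoly (pderiv (OP a n)) z
     = complex_of_real (beta a n) * An a n z * cpoly (OP a (n - 1)) z
       - Bn a n z * cpoly (OP a n) z"
proof -
  define P where "P = OP a n"
  define D where "D = pderiv P"
  define Q where "Q = OP a (n-1)"
  define b where "b = beta a n"
  define R where "R = Rn a n"
  define r where "r = rn a n"
  define T where "T = pCons 0 (pCons 0 D) - smult (a^2) D
      - smult (2*b) (pCons 0 (pCons 0 Q) - smult (a^2) Q) - smult (a*b*R) Q + smult r (pCons 0 P)"
  have "poly T x = 0" for x
    using main_poly[OF assms(1,2), of x, unfolded beta_def[symmetric]]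
    unfolding T_def D_def P_def Q_def b_def R_def r_def
    by (simp add: algebra_simps power2_eq_square)
  hence "T = 0" by (intro peq) simp
  hence "cpoly T z = 0" by (simp add: cpoly_def)
  hence e: "z^2 * cpoly D z - of_real a ^ 2 * cpoly D z
      - of_real (2*b) * (z^2 * cpoly Q z - of_real a ^ 2 * cpoly Q z) - of_real (a*b*R) * cpoly Q z
      + of_real r * (z * cpoly P z) = 0"
    unfolding T_def by (simp add: cpoly_add cpoly_diff cpoly_smult cpoly_pCons power2_eq_square algebra_simps)
  define w where "w = z^2 - (complex_of_real a)^2"
  have w: "w \<noteq> 0"
  proof
    assume "w = 0"
    hence "(z - of_real a) * (z + of_real a) = 0" unfolding w_def by (simp add: algebra_simps power2_eq_square)
    thus False using assms(3,4) by (auto simp: add_eq_0_iff)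
  qed
  have e2: "w * cpoly D z = (2 * of_real b * w + of_real a * of_real b * of_real R) * cpoly Q z - of_real r * z * cpoly P z"
    using e unfolding w_def by (simp add: algebra_simps)
  hence e3: "cpoly D z = ((2 * of_real b * w + of_real a * of_real b * of_real R) * cpoly Q z - of_real r * z * cpoly P z) / w"
    using w by (simp add: eq_divide_eq mult.commute)
  have "complex_of_real (beta a n) * An a n z * cpoly (OP a (n - 1)) z - Bn a n z * cpoly (OP a n) z
     = of_real b * (2 + of_real (a * R) / w) * cpoly Q z - z * of_real r / w * cpoly P z"
    unfolding An_def Bn_def b_def R_def r_def P_def Q_def w_def ..
  also have "\<dots> = cpoly D z" unfolding e3 using w by (simp add: field_simps)
  finally show ?thesis unfolding D_def P_def by simp
qed


end
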